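(* Let $u\in\mathcal{B}^N$, $m\in\mathbb{R}$ and $r\in\mathbb{R}^A$ be such that there exists $\sigma$ with $(r,\sigma)\in F(N,A,u,m)$. Then there is $\Lambda>0$ such that for each $0<\Lambda'\le\Lambda$, if $\mu$ is a solution to $\max_{\gamma:N\to A\text{ bijection}}\sum_{i\in N}\log(\lambda_{i\gamma(i)}(u,r,\Lambda'))$, then for each $i\in N$ and each $\sigma$ with $(r,\sigma)\in F(N,A,u,m)$, $u_i(r_{\mu(i)},\mu(i))=u_i(r_{\sigma(i)},\sigma(i))$.
   Context: Fix a finite set $\{\rho_1,\dots,\rho_k\}\subseteq\mathbb{R}_+$ with $\rho_1=0$. $N=\{1,\dots,n\}$ are agents, $A$ a set of $n$ rooms. $\mathcal{B}$ is the set of utility functions $u_i(r_a,a)=v^i_a-r_a-\rho_i\max\{0,r_a-b_i\}$ with $v^i\in\mathbb{R}^A$, $b_i\ge0$, $\rho_i\in\{\rho_1,\dots,\rho_k\}$. An allocation for $(N,A,u,m)$ is $(r,\sigma)$ with $\sigma:N\to A$ a bijection, $r\in\mathbb{R}^A$, $\sum_ar_a=m$; it is envy-free if $u_i(r_{\sigma(i)},\sigma(i))\ge u_i(r_{\sigma(j)},\sigma(j))$ for all $i,j$; $F(N,A,u,m)$ denotes the set of envy-free allocations. $\lambda_{ia}(u,r):=1+\rho_i$ if $r_a>b_i$ and $:=1$ otherwise. For $\Lambda>0$ and $r$ as in the claim, $\lambda_{ia}(u,r,\Lambda):=\lambda_{ia}(u,r)$ if $u_i(r_{\sigma(i)},\sigma(i))=u_i(r_a,a)$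 (for some/any $\sigma$ with $(r,\sigma)$ envy-free), and $\lambda_{ia}(u,r,\Lambda):=\Lambda$ otherwise. *)

theory Defs
  imports Complex_Main
begin

text \<open>A utility profile u in B^N is encoded by three functions:
  v i a (valuation of agent i for room a), b i (budget of agent i),
  rho i (penalty rate of agent i).
  u_i(r_a, a) = v^i_a - r_a - rho_i * max 0 (r_a - b_i).\<close>

definition util :: "(nat \<Rightarrow> 'a \<Rightarrow> real) \<Rightarrow> (nat \<Rightarrow> real) \<Rightarrow> (nat \<Rightarrow> real)
    \<Rightarrow> nat \<Rightarrow> real \<Rightarrow> 'a \<Rightarrow> real" where
  "util v b rho i ra a = v i a - ra - rho i * max 0 (ra - b i)"

definition in_BN :: "real set \<Rightarrow> nat set \<Rightarrow> (nat \<Rightarrow> real) \<Rightarrow> (nat \<Rightarrow> real) \<Rightarrow> bool" where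
  "in_BN Rhos N b rho \<longleftrightarrow> (\<forall>i\<in>N. b i \<ge> 0 \<and> rho i \<in> Rhos)"

definition envy_free_alloc ::
  "nat set \<Rightarrow> 'a set \<Rightarrow> (nat \<Rightarrow> 'a \<Rightarrow> real) \<Rightarrow> (nat \<Rightarrow> real) \<Rightarrow> (nat \<Rightarrow> real)
    \<Rightarrow> real \<Rightarrow> ('a \<Rightarrow> real) \<Rightarrow> (nat \<Rightarrow> 'a) \<Rightarrow> bool" where
  "envy_free_alloc N A v b rho m r \<sigma> \<longleftrightarrow>
     bij_betw \<sigma> N A \<and> sum r A = m \<and>
     (\<forall>i\<in>N. \<forall>j\<in>N. util v b rho i (r (\<sigma> i)) (\<sigma> i) \<ge> util v b rho i (r (\<sigma> j)) (\<sigma> j))"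

definition lam :: "(nat \<Rightarrow> real) \<Rightarrow> (nat \<Rightarrow> real) \<Rightarrow> ('a \<Rightarrow> real) \<Rightarrow> nat \<Rightarrow> 'a \<Rightarrow> real" where
  "lam b rho r i a = (if r a > b i then 1 + rho i else 1)"

definition lamL ::
  "nat set \<Rightarrow> 'a set \<Rightarrow> (nat \<Rightarrow> 'a \<Rightarrow> real) \<Rightarrow> (nat \<Rightarrow> real) \<Rightarrow> (nat \<Rightarrow> real)
    \<Rightarrow> real \<Rightarrow> ('a \<Rightarrow> real) \<Rightarrow> real \<Rightarrow> nat \<Rightarrow> 'a \<Rightarrow> real" where
  "lamL N A v b rho m r \<Lambda> i a =
     (if \<exists>\<sigma>. envy_free_alloc N A v b rho m r \<sigma> \<and>
             util v b rho i (r (\<sigma> i)) (\<sigma> i) = util v b rho i (r a) a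
      then lam b rho r i a else \<Lambda>)"

definition is_max_log_assignment ::
  "nat set \<Rightarrow> 'a set \<Rightarrow> (nat \<Rightarrow> 'a \<Rightarrow> real) \<Rightarrow> (nat \<Rightarrow> 'a) \<Rightarrow> bool" where
  "is_max_log_assignment N A w \<mu> \<longleftrightarrow> bij_betw \<mu> N A \<and>
     (\<forall>\<gamma>. bij_betw \<gamma> N A \<longrightarrow> (\<Sum>i\<in>N. ln (w i (\<gamma> i))) \<le> (\<Sum>i\<in>N. ln (w i (\<mu> i))))"

end

theory Submission
  imports Defs
begin

lemma ef_max:
  assumes "envy_free_alloc N A v b rho m r \<sigma>" "i \<in> N" "a \<in> A"
  shows "util v b rho i (r a) a \<le> util v b rho i (r (\<sigma> i)) (\<sigma> i)"
proof -
  have bij: "bij_betw \<sigma> N A" using assms(1) unfolding envy_free_alloc_def by blast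
  then obtain j where j: "j \<in> N" "a = \<sigma> j" using assms(3) by (metis bij_betw_imp_surj_on imageE)
  show ?thesis using assms(1,2) j unfolding envy_free_alloc_def by blast
qed

lemma ef_eq:
  assumes "envy_free_alloc N A v b rho m r \<sigma>" "envy_free_alloc N A v b rho m r \<sigma>'" "i \<in> N"
  shows "util v b rho i (r (\<sigma> i)) (\<sigma> i) = util v b rho i (r (\<sigma>' i)) (\<sigma>' i)"
proof -
  have "\<sigma> i \<in> A" "\<sigma>' i \<in> A" using assms unfolding envy_free_alloc_def
    by (meson bij_betw_apply)+
  then show ?thesis using ef_max[OF assms(1,3)] ef_max[OF assms(2,3)] by force
qed

lemma lamL_char:
  assumes "envy_free_alloc N A v b rho m r \<sigma>0" "i \<in> N"
  shows "lamL N A v b rho m r L i a =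
    (if util v b rho i (r a) a = util v b rho i (r (\<sigma>0 i)) (\<sigma>0 i) then lam b rho r i a else L)"
  unfolding lamL_def using assms ef_eq[OF assms(1) _ assms(2)] by metis

theorem lemma1:
  fixes Rhos :: "real set" and n :: nat and A :: "'a set"
    and v :: "nat \<Rightarrow> 'a \<Rightarrow> real" and b rho :: "nat \<Rightarrow> real"
    and m :: real and r :: "'a \<Rightarrow> real"
  assumes "finite Rhos" and "0 \<in> Rhos" and "\<forall>x\<in>Rhos. x \<ge> 0"
    and "finite A" and "card A = n"
    and "in_BN Rhos {1..n} b rho"
    and "\<exists>\<sigma>. envy_free_alloc {1..n} A v b rho m r \<sigma>"
  shows "\<exists>\<Lambda>>0. \<forall>\<Lambda>'. 0 < \<Lambda>' \<and> \<Lambda>' \<le> \<Lambda> \<longrightarrow>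
           (\<forall>\<mu>. is_max_log_assignment {1..n} A (lamL {1..n} A v b rho m r \<Lambda>') \<mu> \<longrightarrow>
              (\<forall>i\<in>{1..n}. \<forall>\<sigma>. envy_free_alloc {1..n} A v b rho m r \<sigma> \<longrightarrow>
                 util v b rho i (r (\<mu> i)) (\<mu> i) = util v b rho i (r (\<sigma> i)) (\<sigma> i)))"
proof -
  define N where "N = {1..n}"
  obtain \<sigma>0 where s0: "envy_free_alloc N A v b rho m r \<sigma>0" using assms(7) N_def by blast
  have rho0: "\<And>j. j \<in> N \<Longrightarrow> rho j \<ge> 0" using assms(3,6) unfolding in_BN_def N_def by blast
  define C where "C = (\<Sum>j\<in>N. ln (1 + rho j))"
  have lnnn: "\<And>j. j \<in> N \<Longrightarrow> ln (1 + rho j) \<ge> 0" using rho0 by simp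
  have C0: "C \<ge> 0" unfolding C_def using lnnn by (simp add: sum_nonneg)
  define L where "L = exp (- C - 1)"
  have "L > 0" unfolding L_def by simp
  moreover have L1: "L \<le> 1" unfolding L_def using C0 by simp
  moreover have "\<forall>\<Lambda>'. 0 < \<Lambda>' \<and> \<Lambda>' \<le> L \<longrightarrow>
           (\<forall>\<mu>. is_max_log_assignment N A (lamL N A v b rho m r \<Lambda>') \<mu> \<longrightarrow>
              (\<forall>i\<in>N. \<forall>\<sigma>. envy_free_alloc N A v b rho m r \<sigma> \<longrightarrow>
                 util v b rho i (r (\<mu> i)) (\<mu> i) = util v b rho i (r (\<sigma> i)) (\<sigma> i)))"
  proof (intro allI impI ballI)
    fix L' \<mu> i \<sigma>
    assume L': "0 < L' \<and> L' \<le> L"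
      and mx: "is_max_log_assignment N A (lamL N A v b rho m r L') \<mu>"
      and i: "i \<in> N" and s: "envy_free_alloc N A v b rho m r \<sigma>"
    let ?w = "lamL N A v b rho m r L'"
    have fin: "finite N" unfolding N_def by simp
    have lam_ge: "\<And>j a. j \<in> N \<Longrightarrow> lam b rho r j a \<ge> 1" using rho0 unfolding lam_def by simp
    have lam_le: "\<And>j a. j \<in> N \<Longrightarrow> lam b rho r j a \<le> 1 + rho j" using rho0 unfolding lam_def by simp
    have s0sum: "(\<Sum>j\<in>N. ln (?w j (\<sigma>0 j))) \<ge> 0"
    proof (rule sum_nonneg)
      fix j assume j: "j \<in> N"
      have "?w j (\<sigma>0 j) = lam b rho r j (\<sigma>0 j)" using lamL_char[OF s0 j] by simp
      then show "ln (?w j (\<sigma>0 j)) \<ge> 0" using lam_ge[OF j] by simp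
    qed
    have bs0: "bij_betw \<sigma>0 N A" using s0 unfolding envy_free_alloc_def by blast
    have le: "(\<Sum>j\<in>N. ln (?w j (\<sigma>0 j))) \<le> (\<Sum>j\<in>N. ln (?w j (\<mu> j)))"
      using mx bs0 unfolding is_max_log_assignment_def by blast
    have "util v b rho i (r (\<mu> i)) (\<mu> i) = util v b rho i (r (\<sigma>0 i)) (\<sigma>0 i)"
    proof (rule ccontr)
      assume ne: "util v b rho i (r (\<mu> i)) (\<mu> i) \<noteq> util v b rho i (r (\<sigma>0 i)) (\<sigma>0 i)"
      have wi: "?w i (\<mu> i) = L'" using lamL_char[OF s0 i] ne by simp
      have trm: "ln (?w j (\<mu> j)) \<le> ln (1 + rho j)" if j: "j \<in> N" for j
      proof (cases "util v b rho j (r (\<mu> j)) (\<mu> j) = util v b rho j (r (\<sigma>0 j)) (\<sigma>0 j)")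
        case True
        then have "?w j (\<mu> j) = lam b rho r j (\<mu> j)" using lamL_char[OF s0 j] by simp
        then show ?thesis using lam_ge[OF j] lam_le[OF j] by (metis ln_le_cancel_iff less_le_trans zero_less_one less_eq_real_def)
      next
        case False
        then have "?w j (\<mu> j) = L'" using lamL_char[OF s0 j] by simp
        then show ?thesis using L' L1 rho0[OF j] by simp
      qed
      have "(\<Sum>j\<in>N. ln (?w j (\<mu> j))) = ln (?w i (\<mu> i)) + (\<Sum>j\<in>N-{i}. ln (?w j (\<mu> j)))"
        using fin i by (simp add: sum.remove)
      also have "\<dots> \<le> ln L' + (\<Sum>j\<in>N-{i}. ln (1 + rho j))"
        using wi trm by (intro add_mono sum_mono) auto
      also have "(\<Sum>j\<in>N-{i}. ln (1 + rho j)) \<le> C"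
        unfolding C_def using fin lnnn by (intro sum_mono2) auto
      also have "ln L' \<le> ln L" using L' by simp
      also have "ln L = - C - 1" unfolding L_def by simp
      finally show False using le s0sum by linarith
    qed
    then show "util v b rho i (r (\<mu> i)) (\<mu> i) = util v b rho i (r (\<sigma> i)) (\<sigma> i)"
      using ef_eq[OF s0 s i] by simp
  qed
  ultimately show ?thesis unfolding N_def by blast
qed

end
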